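(* Let $G$ be a bipartite graph with $n$ vertices and $m\ge 1$ edges. Then $$EE(G) \ge 2\cosh\left(\frac{R_{1/2}}{m}\right) + (n-2),$$ with equality if and only if $G\cong K_{p,q}\cup (n-p-q)K_1$ for some $p,q\ge 1$ with $p+q\le n$.
   Context: All graphs are finite, simple and undirected. For a graph $G$ with adjacency matrix $A(G)$ having eigenvalues $\lambda_1\ge\cdots\ge\lambda_n$, the Estrada index is $EE(G)=\sum_{i=1}^n e^{\lambda_i}$. Writing $d(i)$ for the degree of vertex $i$ and $\mathcal{E}(G)$ for the edge set, $R_{1/2}(G)=\sum_{ij\in\mathcal{E}(G)}\sqrt{d(i)d(j)}$. $K_{p,q}$ is the complete bipartite graph with parts of sizes $p$ and $q$; $\cup$ denotes disjoint union and $rK_1$ denotes $r$ isolated vertices. *)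

theory Defs
  imports Complex_Main "Jordan_Normal_Form.Char_Poly"
begin

definition simple_graph :: "nat \<Rightarrow> (nat \<Rightarrow> nat \<Rightarrow> bool) \<Rightarrow> bool" where
  "simple_graph n E \<longleftrightarrow> (\<forall>i j. E i j \<longrightarrow> i < n \<and> j < n) \<and> (\<forall>i j. E i j \<longrightarrow> E j i) \<and> (\<forall>i. \<not> E i i)"

definition adj_mat :: "nat \<Rightarrow> (nat \<Rightarrow> nat \<Rightarrow> bool) \<Rightarrow> real mat" where
  "adj_mat n E = mat n n (\<lambda>(i,j). if E i j then 1 else 0)"

text \<open>Estrada index: sum of exp over the eigenvalues (with multiplicity) of the adjacency matrix,
  i.e. over a list of reals es with char_poly A = prod (x - lambda).\<close>
definition estrada_index :: "nat \<Rightarrow> (nat \<Rightarrow> nat \<Rightarrow> bool) \<Rightarrow> real" where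
  "estrada_index n E = (SOME s. \<exists>es :: real list.
      char_poly (adj_mat n E) = (\<Prod>a\<leftarrow>es. [:- a, 1:]) \<and> s = (\<Sum>a\<leftarrow>es. exp a))"

definition degree :: "nat \<Rightarrow> (nat \<Rightarrow> nat \<Rightarrow> bool) \<Rightarrow> nat \<Rightarrow> nat" where
  "degree n E i = card {j. j < n \<and> E i j}"

definition edge_set :: "nat \<Rightarrow> (nat \<Rightarrow> nat \<Rightarrow> bool) \<Rightarrow> (nat \<times> nat) set" where
  "edge_set n E = {(i,j). i < j \<and> j < n \<and> E i j}"

definition num_edges :: "nat \<Rightarrow> (nat \<Rightarrow> nat \<Rightarrow> bool) \<Rightarrow> nat" where
  "num_edges n E = card (edge_set n E)"

definition R_half :: "nat \<Rightarrow> (nat \<Rightarrow> nat \<Rightarrow> bool) \<Rightarrow> real" where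
  "R_half n E = (\<Sum>(i,j)\<in>edge_set n E. sqrt (real (degree n E i * degree n E j)))"

definition bipartite :: "nat \<Rightarrow> (nat \<Rightarrow> nat \<Rightarrow> bool) \<Rightarrow> bool" where
  "bipartite n E \<longleftrightarrow> (\<exists>S. \<forall>i j. E i j \<longrightarrow> (i \<in> S \<longleftrightarrow> j \<notin> S))"

text \<open>G is isomorphic to K_{p,q} together with n-p-q isolated vertices, for some p,q \<ge> 1:
  there are disjoint nonempty vertex sets P, Q whose cross pairs are exactly the edges.\<close>
definition complete_bipartite_plus_isolated :: "nat \<Rightarrow> (nat \<Rightarrow> nat \<Rightarrow> bool) \<Rightarrow> bool" where
  "complete_bipartite_plus_isolated n E \<longleftrightarrow> (\<exists>P Q. P \<subseteq> {0..<n} \<and> Q \<subseteq> {0..<n} \<and> P \<inter> Q = {}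
      \<and> card P \<ge> 1 \<and> card Q \<ge> 1
      \<and> (\<forall>i j. E i j \<longleftrightarrow> (i \<in> P \<and> j \<in> Q) \<or> (i \<in> Q \<and> j \<in> P)))"

end

theory Submission
  imports Defs "Jordan_Normal_Form.Schur_Decomposition"
begin

lemma real_sym_char_poly_split:
  fixes A :: "real mat"
  assumes A: "A \<in> carrier_mat n n" and sym: "\<And>i j. i < n \<Longrightarrow> j < n \<Longrightarrow> A $$ (i,j) = A $$ (j,i)"
  shows "\<exists>es. char_poly A = (\<Prod>a\<leftarrow>es. [:- a, 1:])"
proof -
  define Ac where "Ac = map_mat (of_real :: real \<Rightarrow> complex) A"
  have Ac: "Ac \<in> carrier_mat n n" using A by (simp add: Ac_def)
  have cpAc: "char_poly Ac = map_poly of_real (char_poly A)"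
    unfolding Ac_def by (rule of_real_hom.char_poly_hom[OF A])
  obtain as where as: "char_poly Ac = (\<Prod>a\<leftarrow>as. [:- a, 1:])"
    using char_poly_factorized[OF Ac] by blast
  have real: "Im a = 0" if a: "a \<in> set as" for a
  proof -
    have "poly (char_poly Ac) a = 0" unfolding as using a
      by (induct as) (auto simp: poly_prod_list)
    hence "eigenvalue Ac a" using eigenvalue_root_char_poly[OF Ac] by simp
    then obtain v where ev: "eigenvector Ac v a" unfolding eigenvalue_def by blast
    hence v: "v \<in> carrier_vec n" "v \<noteq> 0\<^sub>v n" "Ac *\<^sub>v v = a \<cdot>\<^sub>v v"
      using Ac unfolding eigenvector_def by auto
    have row: "(\<Sum>j<n. complex_of_real (A $$ (i,j)) * v $ j) = a * v $ i" if "i < n" for i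
    proof -
      have "(Ac *\<^sub>v v) $ i = a * v $ i" using v(3) that v(1) by (metis index_smult_vec(1) carrier_vecD)
      moreover have "(Ac *\<^sub>v v) $ i = (\<Sum>j<n. complex_of_real (A $$ (i,j)) * v $ j)"
        using that A v(1) unfolding Ac_def
        by (auto simp: scalar_prod_def lessThan_atLeast0 intro!: sum.cong)
      ultimately show ?thesis by simp
    qed
    define s where "s = (\<Sum>i<n. \<Sum>j<n. cnj (v $ i) * complex_of_real (A $$ (i,j)) * v $ j)"
    define t where "t = (\<Sum>i<n. cnj (v $ i) * v $ i)"
    have "s = (\<Sum>i<n. cnj (v $ i) * (\<Sum>j<n. complex_of_real (A $$ (i,j)) * v $ j))"
      unfolding s_def by (simp add: sum_distrib_left mult.assoc)
    also have "\<dots> = (\<Sum>i<n. a * (cnj (v $ i) * v $ i))" by (rule sum.cong) (auto simp: row)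
    also have "\<dots> = a * t" unfolding t_def by (simp add: sum_distrib_left)
    finally have st: "s = a * t" .
    have "cnj s = (\<Sum>i<n. \<Sum>j<n. v $ i * complex_of_real (A $$ (i,j)) * cnj (v $ j))"
      unfolding s_def by (simp add: cnj_sum)
    also have "\<dots> = (\<Sum>j<n. \<Sum>i<n. v $ i * complex_of_real (A $$ (i,j)) * cnj (v $ j))"
      by (rule sum.swap)
    also have "\<dots> = s" unfolding s_def
      by (auto intro!: sum.cong simp: sym mult.commute mult.left_commute)
    finally have "cnj s = s" .
    hence "Im s = 0" by (simp add: complex_eq_iff)
    have tt: "t = complex_of_real (\<Sum>i<n. (cmod (v $ i))^2)"
      unfolding t_def by (simp add: of_real_sum complex_norm_square mult.commute del: of_real_power)
    obtain i where i: "i < n" "v $ i \<noteq> 0"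
    proof (rule ccontr)
      assume "\<not> thesis"
      hence "v = 0\<^sub>v n" using v(1) that by (intro eq_vecI) auto
      with v(2) show False by simp
    qed
    define T where "T = (\<Sum>i<n. (cmod (v $ i))^2)"
    have T0: "T > 0" unfolding T_def
      by (rule sum_pos2[of _ i]) (use i in auto)
    have "Im s = Im a * T" unfolding st tt T_def by simp
    with T0 \<open>Im s = 0\<close> show "Im a = 0" by simp
  qed
  define es where "es = map Re as"
  have "as = map of_real es" unfolding es_def using real by (induct as) (auto simp: complex_eq_iff)
  interpret m: map_poly_comm_ring_hom "of_real :: real \<Rightarrow> complex" ..
  have mp: "map_poly of_real (\<Prod>a\<leftarrow>es. [:- a, 1:]) = (\<Prod>a\<leftarrow>es. [:- (of_real a :: complex), 1:])"
  proof (induct es)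
    case (Cons e es)
    have "map_poly (of_real :: real \<Rightarrow> complex) (\<Prod>a\<leftarrow>e#es. [:- a, 1:])
       = map_poly of_real [:- e, 1:] * map_poly of_real (\<Prod>a\<leftarrow>es. [:- a, 1:])"
      by (metis list.map(2) prod_list.Cons m.hom_mult)
    also have "\<dots> = [:- (of_real e :: complex), 1:] * (\<Prod>a\<leftarrow>es. [:- (of_real a :: complex), 1:])"
      using Cons by simp
    finally show ?case by simp
  qed simp
  hence "map_poly (of_real :: real \<Rightarrow> complex) (char_poly A) = map_poly of_real (\<Prod>a\<leftarrow>es. [:- a, 1:])"
    using cpAc as \<open>as = map of_real es\<close> by (simp add: mp o_def)
  have "char_poly A = (\<Prod>a\<leftarrow>es. [:- a, 1:])"
  proof -
    interpret mi: map_poly_inj_comm_ring_hom "of_real :: real \<Rightarrow> complex" ..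
    show ?thesis using mi.injectivity[OF \<open>map_poly (of_real :: real \<Rightarrow> complex) (char_poly A) = _\<close>] .
  qed
  thus ?thesis by blast
qed

lemma mult_entry:
  fixes A B :: "'a :: comm_semiring_0 mat"
  assumes "A \<in> carrier_mat n m" "B \<in> carrier_mat m k" "i < n" "j < k"
  shows "(A * B) $$ (i,j) = (\<Sum>l<m. A $$ (i,l) * B $$ (l,j))"
  using assms by (auto simp: scalar_prod_def lessThan_atLeast0 intro!: sum.cong)

lemma sum_swap3:
  fixes g :: "nat \<Rightarrow> nat \<Rightarrow> nat \<Rightarrow> 'a :: comm_monoid_add"
  shows "(\<Sum>i<n. \<Sum>l<n. \<Sum>j<n. g i l j) = (\<Sum>j<n. \<Sum>l<n. \<Sum>i<n. g i l j)"
proof -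
  have "(\<Sum>i<n. \<Sum>l<n. \<Sum>j<n. g i l j) = (\<Sum>i<n. \<Sum>j<n. \<Sum>l<n. g i l j)"
    by (rule sum.cong[OF refl], rule sum.swap)
  also have "\<dots> = (\<Sum>j<n. \<Sum>i<n. \<Sum>l<n. g i l j)" by (rule sum.swap)
  also have "\<dots> = (\<Sum>j<n. \<Sum>l<n. \<Sum>i<n. g i l j)" by (rule sum.cong[OF refl], rule sum.swap)
  finally show ?thesis .
qed

lemma trace_similar:
  fixes P C Q :: "'a :: comm_semiring_1 mat"
  assumes P: "P \<in> carrier_mat n n" and C: "C \<in> carrier_mat n n" and Q: "Q \<in> carrier_mat n n"
    and QP: "Q * P = 1\<^sub>m n"
  shows "(\<Sum>i<n. (P * C * Q) $$ (i,i)) = (\<Sum>i<n. C $$ (i,i))"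
proof -
  have "(\<Sum>i<n. (P * C * Q) $$ (i,i)) = (\<Sum>i<n. \<Sum>l<n. (\<Sum>j<n. P $$ (i,j) * C $$ (j,l)) * Q $$ (l,i))"
  proof (rule sum.cong[OF refl])
    fix i assume i: "i \<in> {..<n}"
    have "(P * C * Q) $$ (i,i) = (\<Sum>l<n. (P * C) $$ (i,l) * Q $$ (l,i))"
      using P C Q i by (intro mult_entry) auto
    also have "\<dots> = (\<Sum>l<n. (\<Sum>j<n. P $$ (i,j) * C $$ (j,l)) * Q $$ (l,i))"
      using P C Q i by (intro sum.cong refl arg_cong2[where f="(*)"] mult_entry) auto
    finally show "(P * C * Q) $$ (i,i) = (\<Sum>l<n. (\<Sum>j<n. P $$ (i,j) * C $$ (j,l)) * Q $$ (l,i))" .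
  qed
  also have "\<dots> = (\<Sum>i<n. \<Sum>l<n. \<Sum>j<n. C $$ (j,l) * (Q $$ (l,i) * P $$ (i,j)))"
    by (intro sum.cong refl) (simp add: sum_distrib_right sum_distrib_left mult.commute mult.left_commute)
  also have "\<dots> = (\<Sum>j<n. \<Sum>l<n. C $$ (j,l) * (\<Sum>i<n. Q $$ (l,i) * P $$ (i,j)))"
    by (subst sum_swap3) (simp add: sum_distrib_left)
  also have "\<dots> = (\<Sum>j<n. \<Sum>l<n. C $$ (j,l) * (Q * P) $$ (l,j))"
    using P Q by (intro sum.cong refl arg_cong2[where f="(*)"] mult_entry[symmetric]) auto
  also have "\<dots> = (\<Sum>j<n. \<Sum>l<n. C $$ (j,l) * (if l = j then 1 else 0))"
    unfolding QP by (auto intro!: sum.cong)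
  also have "\<dots> = (\<Sum>j<n. C $$ (j,j))"
    by (simp add: if_distrib[of "\<lambda>x. _ * x"] cong: if_cong)
  finally show ?thesis .
qed

lemma upper_triangular_pow:
  fixes B :: "'a :: comm_semiring_1 mat"
  assumes B: "B \<in> carrier_mat n n" and ut: "upper_triangular B"
  shows "upper_triangular (B ^\<^sub>m k) \<and> (\<forall>i<n. (B ^\<^sub>m k) $$ (i,i) = (B $$ (i,i))^k)"
proof (induct k)
  case 0
  then show ?case using B by auto
next
  case (Suc k)
  have Bk: "B ^\<^sub>m k \<in> carrier_mat n n" using B by simp
  have lt: "(B ^\<^sub>m Suc k) $$ (i,j) = 0" if "j < i" "i < n" for i j
  proof -
    have "(B ^\<^sub>m Suc k) $$ (i,j) = (\<Sum>l<n. (B ^\<^sub>m k) $$ (i,l) * B $$ (l,j))"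
      using Bk B that by (simp del: index_mult_mat add: mult_entry[OF Bk B])
    also have "\<dots> = 0"
    proof (rule sum.neutral, rule ballI)
      fix l assume "l \<in> {..<n}"
      hence "l < n" by auto
      show "(B ^\<^sub>m k) $$ (i,l) * B $$ (l,j) = 0"
      proof (cases "l < i")
        case True then show ?thesis using Suc Bk that by (auto dest!: upper_triangularD)
      next
        case False
        have "B $$ (l,j) = 0" using ut by (rule upper_triangularD) (use B that False \<open>l<n\<close> in auto)
        then show ?thesis by simp
      qed
    qed
    finally show ?thesis .
  qed
  have dg: "(B ^\<^sub>m Suc k) $$ (i,i) = (B $$ (i,i))^Suc k" if "i < n" for i
  proof -
    have "(B ^\<^sub>m Suc k) $$ (i,i) = (\<Sum>l<n. (B ^\<^sub>m k) $$ (i,l) * B $$ (l,i))"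
      using Bk B that by (simp del: index_mult_mat add: mult_entry[OF Bk B])
    also have "\<dots> = (B ^\<^sub>m k) $$ (i,i) * B $$ (i,i) + (\<Sum>l\<in>{..<n}-{i}. (B ^\<^sub>m k) $$ (i,l) * B $$ (l,i))"
      by (rule sum.remove) (use that in auto)
    also have "(\<Sum>l\<in>{..<n}-{i}. (B ^\<^sub>m k) $$ (i,l) * B $$ (l,i)) = 0"
    proof (rule sum.neutral, rule ballI)
      fix l assume "l \<in> {..<n}-{i}"
      hence "l < n" "l \<noteq> i" by auto
      show "(B ^\<^sub>m k) $$ (i,l) * B $$ (l,i) = 0"
      proof (cases "l < i")
        case True then show ?thesis using Suc Bk that by (auto dest!: upper_triangularD)
      next
        case False
        have "B $$ (l,i) = 0" using ut by (rule upper_triangularD) (use B that False \<open>l<n\<close> \<open>l \<noteq> i\<close> in auto)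
        then show ?thesis by simp
      qed
    qed
    finally show ?thesis using Suc that by (simp add: mult.commute)
  qed
  show ?case using lt dg B by (auto intro!: upper_triangularI)
qed

lemma trace_pow_eigen:
  fixes A :: "real mat"
  assumes A: "A \<in> carrier_mat n n" and cp: "char_poly A = (\<Prod>a\<leftarrow>es. [:- a, 1:])"
  shows "(\<Sum>e\<leftarrow>es. e^k) = (\<Sum>i<n. (A ^\<^sub>m k) $$ (i,i))"
proof -
  obtain B P Q where sd: "schur_decomposition A es = (B,P,Q)" by (metis prod_cases3)
  from schur_decomposition[OF A cp sd]
  have wit: "similar_mat_wit A B P Q" and ut: "upper_triangular B" and dg: "diag_mat B = es" by blast+
  have B: "B \<in> carrier_mat n n" using similar_mat_witD2(5)[OF A wit] .
  have P: "P \<in> carrier_mat n n" using similar_mat_witD2(6)[OF A wit] .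
  have Q: "Q \<in> carrier_mat n n" using similar_mat_witD2(7)[OF A wit] .
  have QP: "Q * P = 1\<^sub>m n" using similar_mat_witD2(2)[OF A wit] .
  have "(\<Sum>i<n. (A ^\<^sub>m k) $$ (i,i)) = (\<Sum>i<n. (P * B ^\<^sub>m k * Q) $$ (i,i))"
    by (simp add: similar_mat_wit_pow_id[OF wit])
  also have "\<dots> = (\<Sum>i<n. (B ^\<^sub>m k) $$ (i,i))"
    by (rule trace_similar[OF P _ Q QP]) (use B in simp)
  also have "\<dots> = (\<Sum>i<n. (B $$ (i,i))^k)"
    using upper_triangular_pow[OF B ut, of k] by simp
  also have "\<dots> = (\<Sum>e\<leftarrow>es. e^k)"
    unfolding dg[symmetric] diag_mat_def using B
    by (simp add: sum_list_distinct_conv_sum_set atLeast0LessThan o_def)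
  finally show ?thesis by simp
qed

fun pw :: "nat \<Rightarrow> (nat \<Rightarrow> nat \<Rightarrow> real) \<Rightarrow> nat \<Rightarrow> nat \<Rightarrow> nat \<Rightarrow> real" where
  "pw n a 0 i j = (if i = j then 1 else 0)"
| "pw n a (Suc k) i j = (\<Sum>l<n. pw n a k i l * a l j)"

lemma sum_delta_r: fixes j n :: nat shows "j < n \<Longrightarrow> (\<Sum>l<n. f l * (if l = j then 1 else 0)) = (f j :: real)"
proof -
  assume j: "j < n"
  have "(\<Sum>l<n. f l * (if l = j then 1 else 0)) = (\<Sum>l<n. if l = j then f l else 0)"
    by (intro sum.cong) auto
  also have "\<dots> = f j + (\<Sum>l\<in>{..<n}-{j}. if l = j then f l else 0)"
    using j by (subst sum.remove[of _ j]) auto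
  also have "(\<Sum>l\<in>{..<n}-{j}. if l = j then f l else 0) = 0" by (rule sum.neutral) auto
  finally show ?thesis by simp
qed

lemma sum_delta_l: fixes i n :: nat shows "i < n \<Longrightarrow> (\<Sum>l<n. (if i = l then 1 else 0) * f l) = (f i :: real)"
proof -
  assume i: "i < n"
  have "(\<Sum>l<n. (if i = l then 1 else 0) * f l) = (\<Sum>l<n. if i = l then f l else 0)"
    by (intro sum.cong) auto
  also have "\<dots> = f i + (\<Sum>l\<in>{..<n}-{i}. if i = l then f l else 0)"
    using i by (subst sum.remove[of _ i]) auto
  also have "(\<Sum>l\<in>{..<n}-{i}. if i = l then f l else 0) = 0" by (rule sum.neutral) auto
  finally show ?thesis by simp
qed

lemma pw_add: "j < n \<Longrightarrow> pw n a (p + q) i j = (\<Sum>l<n. pw n a p i l * pw n a q l j)"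
proof (induct q arbitrary: j)
  case 0
  then show ?case by (simp only: add_0_right pw.simps sum_delta_r)
next
  case (Suc q)
  have "pw n a (p + Suc q) i j = (\<Sum>l<n. pw n a (p+q) i l * a l j)" by simp
  also have "\<dots> = (\<Sum>l<n. (\<Sum>l'<n. pw n a p i l' * pw n a q l' l) * a l j)"
    using Suc(1) by (intro sum.cong refl) auto
  also have "\<dots> = (\<Sum>l<n. \<Sum>l'<n. pw n a p i l' * (pw n a q l' l * a l j))"
    by (simp add: sum_distrib_right mult.assoc)
  also have "\<dots> = (\<Sum>l'<n. \<Sum>l<n. pw n a p i l' * (pw n a q l' l * a l j))"
    by (rule sum.swap)
  also have "\<dots> = (\<Sum>l'<n. pw n a p i l' * pw n a (Suc q) l' j)"
    by (simp add: sum_distrib_left)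
  finally show ?case .
qed

lemma pw_one: "i < n \<Longrightarrow> pw n a 1 i j = a i j"
  by (simp add: sum_delta_l)

lemma pw_Suc_left: "i < n \<Longrightarrow> j < n \<Longrightarrow> pw n a (Suc k) i j = (\<Sum>l<n. a i l * pw n a k l j)"
  using pw_add[of j n a 1 k i] pw_one[of i n a] by (simp del: pw.simps)

lemma pw_sym:
  assumes sym: "\<And>i j. a i j = a j i"
  shows "i < n \<Longrightarrow> j < n \<Longrightarrow> pw n a k i j = pw n a k j i"
proof (induct k arbitrary: i j)
  case 0 then show ?case by auto
next
  case (Suc k)
  have "pw n a (Suc k) i j = (\<Sum>l<n. pw n a k i l * a l j)" by simp
  also have "\<dots> = (\<Sum>l<n. a j l * pw n a k l i)"
    using Suc by (intro sum.cong refl) (auto simp: sym mult.commute)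
  also have "\<dots> = pw n a (Suc k) j i" using pw_Suc_left[of j n i a k] Suc by simp
  finally show ?case .
qed

lemma trace_sq:
  assumes sym: "\<And>i j. a i j = a j i"
  shows "(\<Sum>i<n. pw n a (k+k) i i) = (\<Sum>i<n. \<Sum>l<n. (pw n a k i l)^2)"
proof (intro sum.cong refl)
  fix i assume i: "i \<in> {..<n}"
  show "pw n a (k+k) i i = (\<Sum>l<n. (pw n a k i l)^2)"
    using i by (simp add: pw_add power2_eq_square) (intro sum.cong refl, simp add: pw_sym[OF sym])
qed

lemma pw_sign:
  fixes sg :: "nat \<Rightarrow> real"
  assumes sg2: "\<And>i. sg i * sg i = 1" and asg: "\<And>i j. sg i * a i j * sg j = - a i j"
  shows "sg i * pw n a k i j * sg j = (-1)^k * pw n a k i j"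
proof (induct k arbitrary: j)
  case 0 then show ?case using sg2 by auto
next
  case (Suc k)
  have "sg i * pw n a (Suc k) i j * sg j = (\<Sum>l<n. (sg i * pw n a k i l * sg l) * (sg l * a l j * sg j))"
    by (simp add: sum_distrib_left sum_distrib_right)
       (intro sum.cong refl, simp add: mult.assoc[symmetric], simp add: mult.assoc sg2)
  also have "\<dots> = (\<Sum>l<n. (-1)^(Suc k) * (pw n a k i l * a l j))"
  proof (intro sum.cong refl)
    fix l
    have "(sg i * pw n a k i l * sg l) * (sg l * a l j * sg j) = ((-1)^k * pw n a k i l) * (- a l j)"
      by (simp only: Suc asg)
    then show "(sg i * pw n a k i l * sg l) * (sg l * a l j * sg j) = (-1)^(Suc k) * (pw n a k i l * a l j)"
      by simp
  qed
  also have "\<dots> = (-1)^(Suc k) * pw n a (Suc k) i j"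
    by (simp add: sum_distrib_left)
  finally show ?case .
qed

lemma pw_odd_diag:
  fixes sg :: "nat \<Rightarrow> real"
  assumes sg2: "\<And>i. sg i * sg i = 1" and asg: "\<And>i j. sg i * a i j * sg j = - a i j"
    and k: "odd k"
  shows "pw n a k i i = 0"
proof -
  have "sg i * pw n a k i i * sg i = pw n a k i i" using sg2[of i] by (simp add: algebra_simps)
  moreover have "sg i * pw n a k i i * sg i = (-1)^k * pw n a k i i" by (rule pw_sign[OF sg2 asg])
  ultimately show ?thesis using k by simp
qed

lemma sq_expand_sum:
  fixes v u y :: "nat \<Rightarrow> real"
  shows "(\<Sum>l<n. (al * v l - be * u l - ga * y l)^2) =
    al^2 * (\<Sum>l<n. (v l)^2) + be^2 * (\<Sum>l<n. (u l)^2) + ga^2 * (\<Sum>l<n. (y l)^2)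
    - 2 * al * be * (\<Sum>l<n. v l * u l) - 2 * al * ga * (\<Sum>l<n. v l * y l) + 2 * be * ga * (\<Sum>l<n. u l * y l)"
proof -
  have "(\<Sum>l<n. (al * v l - be * u l - ga * y l)^2) = (\<Sum>l<n.
    al^2 * (v l)^2 + be^2 * (u l)^2 + ga^2 * (y l)^2
    - 2 * al * be * (v l * u l) - 2 * al * ga * (v l * y l) + 2 * be * ga * (u l * y l))"
    by (intro sum.cong refl) (simp add: power2_eq_square algebra_simps)
  also have "\<dots> = al^2 * (\<Sum>l<n. (v l)^2) + be^2 * (\<Sum>l<n. (u l)^2) + ga^2 * (\<Sum>l<n. (y l)^2)
    - 2 * al * be * (\<Sum>l<n. v l * u l) - 2 * al * ga * (\<Sum>l<n. v l * y l) + 2 * be * ga * (\<Sum>l<n. u l * y l)"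
    by (simp only: sum.distrib sum_subtractf sum_distrib_left)
  finally show ?thesis .
qed

lemma cauchy_schwarz_sum:
  fixes u v :: "nat \<Rightarrow> real"
  shows "(\<Sum>l<n. u l * v l)^2 \<le> (\<Sum>l<n. (u l)^2) * (\<Sum>l<n. (v l)^2)"
proof -
  define M where "M = (\<Sum>l<n. (u l)^2)"
  define c where "c = (\<Sum>l<n. u l * v l)"
  have M0: "M \<ge> 0" unfolding M_def by (intro sum_nonneg) auto
  show ?thesis
  proof (cases "M = 0")
    case True
    hence "\<forall>l\<in>{..<n}. (u l)^2 = 0" unfolding M_def by (subst sum_nonneg_eq_0_iff[symmetric]) auto
    hence "c = 0" unfolding c_def by (intro sum.neutral) auto
    thus ?thesis using True by (simp add: M_def c_def)
  next
    case False
    hence Mp: "M > 0" using M0 by simp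
    have "0 \<le> (\<Sum>l<n. (M * v l - c * u l - 0 * u l)^2)" by (intro sum_nonneg) auto
    also have "\<dots> = M^2 * (\<Sum>l<n. (v l)^2) + c^2 * M - 2 * M * c * c"
      by (subst sq_expand_sum) (simp add: M_def c_def mult.commute)
    finally have "0 \<le> M * (M * (\<Sum>l<n. (v l)^2) - c^2)" by (simp add: power2_eq_square algebra_simps)
    hence "0 \<le> M * (\<Sum>l<n. (v l)^2) - c^2" using Mp by (simp add: zero_le_mult_iff)
    thus ?thesis by (simp add: M_def c_def mult.commute)
  qed
qed

lemma bessel_gap:
  fixes b x y :: "nat \<Rightarrow> real"
  assumes xx: "(\<Sum>l<n. (x l)^2) = M" and yy: "(\<Sum>l<n. (y l)^2) = M"
    and xy: "(\<Sum>l<n. x l * y l) = 0" and M: "M > 0"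
  shows "M * (\<Sum>l<n. (b l)^2) - (\<Sum>l<n. b l * x l)^2 - (\<Sum>l<n. b l * y l)^2
    = (\<Sum>l<n. (M * b l - (\<Sum>l<n. b l * x l) * x l - (\<Sum>l<n. b l * y l) * y l)^2) / M"
proof -
  define \<alpha> where "\<alpha> = (\<Sum>l<n. b l * x l)"
  define \<beta> where "\<beta> = (\<Sum>l<n. b l * y l)"
  have "(\<Sum>l<n. (M * b l - \<alpha> * x l - \<beta> * y l)^2) =
    M^2 * (\<Sum>l<n. (b l)^2) + \<alpha>^2 * M + \<beta>^2 * M - 2 * M * \<alpha> * \<alpha> - 2 * M * \<beta> * \<beta> + 2 * \<alpha> * \<beta> * 0"
    by (subst sq_expand_sum) (simp only: xx yy xy \<alpha>_def[symmetric] \<beta>_def[symmetric])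
  also have "\<dots> = M * (M * (\<Sum>l<n. (b l)^2) - \<alpha>^2 - \<beta>^2)" by (simp add: power2_eq_square algebra_simps)
  finally show ?thesis using M unfolding \<alpha>_def[symmetric] \<beta>_def[symmetric] by simp
qed

definition wv :: "nat \<Rightarrow> (nat \<Rightarrow> nat \<Rightarrow> real) \<Rightarrow> (nat \<Rightarrow> real) \<Rightarrow> nat \<Rightarrow> nat \<Rightarrow> real" where
  "wv n a x k i = (\<Sum>l<n. pw n a k i l * x l)"

definition gm :: "nat \<Rightarrow> (nat \<Rightarrow> nat \<Rightarrow> real) \<Rightarrow> (nat \<Rightarrow> real) \<Rightarrow> nat \<Rightarrow> nat \<Rightarrow> real" where
  "gm n a x p q = (\<Sum>i<n. wv n a x p i * wv n a x q i)"

lemma wv0: "i < n \<Longrightarrow> wv n a x 0 i = x i"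
  unfolding wv_def by (simp only: pw.simps sum_delta_l)

lemma wv_Suc: "i < n \<Longrightarrow> wv n a x (Suc k) i = (\<Sum>l<n. a i l * wv n a x k l)"
proof -
  assume i: "i < n"
  have "wv n a x (Suc k) i = (\<Sum>l<n. (\<Sum>l'<n. a i l' * pw n a k l' l) * x l)"
    unfolding wv_def using i by (intro sum.cong refl) (simp add: pw_Suc_left del: pw.simps)
  also have "\<dots> = (\<Sum>l<n. \<Sum>l'<n. a i l' * (pw n a k l' l * x l))"
    by (simp add: sum_distrib_right mult.assoc)
  also have "\<dots> = (\<Sum>l'<n. \<Sum>l<n. a i l' * (pw n a k l' l * x l))" by (rule sum.swap)
  also have "\<dots> = (\<Sum>l<n. a i l * wv n a x k l)" unfolding wv_def by (simp add: sum_distrib_left)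
  finally show ?thesis .
qed

lemma gm_shift:
  assumes sym: "\<And>i j. a i j = a j i"
  shows "gm n a x (Suc p) q = gm n a x p (Suc q)"
proof -
  have "gm n a x (Suc p) q = (\<Sum>i<n. (\<Sum>l<n. a i l * wv n a x p l) * wv n a x q i)"
    unfolding gm_def by (intro sum.cong refl) (simp add: wv_Suc)
  also have "\<dots> = (\<Sum>i<n. \<Sum>l<n. wv n a x p l * (a l i * wv n a x q i))"
  proof (intro sum.cong refl)
    fix i assume "i \<in> {..<n}"
    show "(\<Sum>l<n. a i l * wv n a x p l) * wv n a x q i = (\<Sum>l<n. wv n a x p l * (a l i * wv n a x q i))"
      unfolding sum_distrib_right by (intro sum.cong refl) (simp add: sym[of i] mult_ac)
  qed
  also have "\<dots> = (\<Sum>l<n. \<Sum>i<n. wv n a x p l * (a l i * wv n a x q i))" by (rule sum.swap)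
  also have "\<dots> = gm n a x p (Suc q)"
    unfolding gm_def by (intro sum.cong refl) (simp add: wv_Suc sum_distrib_left)
  finally show ?thesis .
qed

lemma gm_eq:
  assumes sym: "\<And>i j. a i j = a j i"
  shows "gm n a x p q = gm n a x 0 (p + q)"
proof (induct p arbitrary: q)
  case (Suc p)
  then show ?case using gm_shift[OF sym, where n=n and x=x and p=p and q=q] by simp
qed simp

lemma logconv:
  fixes T :: "nat \<Rightarrow> real"
  assumes nn: "\<And>j. T j \<ge> 0" and T0: "T 0 > 0"
    and lc: "\<And>j. (T (Suc j))^2 \<le> T j * T (Suc (Suc j))"
  shows "T k \<ge> T 0 * (T 1 / T 0)^k"
proof -
  define r where "r = T 1 / T 0"
  have r0: "r \<ge> 0" unfolding r_def using nn T0 by simp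
  have step: "T (Suc j) \<ge> r * T j" for j
  proof (induct j)
    case 0 then show ?case using T0 by (simp add: r_def)
  next
    case (Suc j)
    show ?case
    proof (cases "T (Suc j) = 0")
      case True then show ?thesis using nn by simp
    next
      case False
      hence p1: "T (Suc j) > 0" using nn[of "Suc j"] by simp
      have pj: "T j > 0"
      proof (rule ccontr)
        assume "\<not> T j > 0"
        hence "T j = 0" using nn[of j] by simp
        hence "(T (Suc j))^2 \<le> 0" using lc[of j] by simp
        thus False using mult_pos_pos[OF p1 p1] by (simp add: power2_eq_square)
      qed
      have "T j * (r * T (Suc j)) = T (Suc j) * (r * T j)" by (simp add: algebra_simps)
      also have "\<dots> \<le> T (Suc j) * T (Suc j)" using Suc p1 by (intro mult_left_mono) auto
      also have "\<dots> \<le> T j * T (Suc (Suc j))" using lc[of j] by (simp add: power2_eq_square)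
      finally have "T j * (r * T (Suc j)) \<le> T j * T (Suc (Suc j))" .
      thus ?thesis using pj by simp
    qed
  qed
  have "T k \<ge> T 0 * r^k"
  proof (induct k)
    case (Suc k)
    have "T 0 * r ^ Suc k = r * (T 0 * r^k)" by (simp add: algebra_simps)
    also have "\<dots> \<le> r * T k" using Suc r0 by (intro mult_left_mono) auto
    also have "\<dots> \<le> T (Suc k)" using step by simp
    finally show ?case .
  qed simp
  thus ?thesis unfolding r_def .
qed

lemma row_y:
  fixes sg :: "nat \<Rightarrow> real"
  assumes sg2: "\<And>i. sg i * sg i = 1" and asg: "\<And>i j. sg i * a i j * sg j = - a i j"
  shows "(\<Sum>l<n. pw n a k i l * (sg l * x l))^2 = (wv n a x k i)^2"
proof -
  have pl: "pw n a k i l * sg l = (-1)^k * sg i * pw n a k i l" for l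
  proof -
    have e: "sg i * pw n a k i l * sg l = (-1)^k * pw n a k i l" by (rule pw_sign[OF sg2 asg])
    have "pw n a k i l * sg l = sg i * (sg i * pw n a k i l * sg l)" using sg2[of i] by (simp add: algebra_simps)
    also have "\<dots> = sg i * ((-1)^k * pw n a k i l)" by (simp only: e)
    also have "\<dots> = (-1)^k * sg i * pw n a k i l" by (simp add: algebra_simps)
    finally show ?thesis .
  qed
  have "(\<Sum>l<n. pw n a k i l * (sg l * x l)) = (\<Sum>l<n. (-1)^k * sg i * (pw n a k i l * x l))"
    by (intro sum.cong refl) (simp add: mult.assoc[symmetric] pl)
  hence "(\<Sum>l<n. pw n a k i l * (sg l * x l)) = (-1)^k * sg i * wv n a x k i"
    unfolding wv_def by (simp add: sum_distrib_left)
  hence "(\<Sum>l<n. pw n a k i l * (sg l * x l))^2 = ((-1)^k)^2 * (sg i * sg i) * (wv n a x k i)^2"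
    by (simp add: power2_eq_square algebra_simps)
  also have "((-1::real)^k)^2 = 1" by (cases "even k") auto
  hence "((-1::real)^k)^2 * (sg i * sg i) * (wv n a x k i)^2 = (wv n a x k i)^2" using sg2[of i] by simp
  finally show ?thesis .
qed

lemma trace_gap:
  fixes sg x :: "nat \<Rightarrow> real"
  assumes sym: "\<And>i j. a i j = a j i"
    and sg2: "\<And>i. sg i * sg i = 1" and asg: "\<And>i j. sg i * a i j * sg j = - a i j"
    and xx: "(\<Sum>l<n. (x l)^2) = M" and xy: "(\<Sum>l<n. x l * (sg l * x l)) = 0" and M: "M > 0"
  shows "M * (\<Sum>i<n. pw n a (k+k) i i) - 2 * (\<Sum>i<n. (wv n a x k i)^2) =
    (\<Sum>i<n. (\<Sum>l<n. (M * pw n a k i l - (\<Sum>l<n. pw n a k i l * x l) * x l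
        - (\<Sum>l<n. pw n a k i l * (sg l * x l)) * (sg l * x l))^2) / M)"
proof -
  have "(sg l * x l)^2 = (sg l * sg l) * (x l)^2" for l by (simp add: power2_eq_square mult_ac)
  hence yy: "(\<Sum>l<n. (sg l * x l)^2) = M" using xx sg2 by simp
  have "M * (\<Sum>i<n. pw n a (k+k) i i) - 2 * (\<Sum>i<n. (wv n a x k i)^2)
     = (\<Sum>i<n. M * (\<Sum>l<n. (pw n a k i l)^2) - (\<Sum>l<n. pw n a k i l * x l)^2 - (\<Sum>l<n. pw n a k i l * (sg l * x l))^2)"
    by (simp add: trace_sq[OF sym] row_y[OF sg2 asg] wv_def sum_distrib_left sum_subtractf)
  also have "\<dots> = (\<Sum>i<n. (\<Sum>l<n. (M * pw n a k i l - (\<Sum>l<n. pw n a k i l * x l) * x l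
        - (\<Sum>l<n. pw n a k i l * (sg l * x l)) * (sg l * x l))^2) / M)"
    by (intro sum.cong refl bessel_gap[OF xx yy xy M])
  finally show ?thesis .
qed

lemma moments:
  fixes sg x :: "nat \<Rightarrow> real"
  assumes sym: "\<And>i j. a i j = a j i"
    and xx: "(\<Sum>l<n. (x l)^2) = M" and M: "M > 0"
  defines "\<rho> \<equiv> (\<Sum>i<n. x i * (\<Sum>l<n. a i l * x l)) / M"
  shows "(\<Sum>i<n. (wv n a x k i)^2) \<ge> M * (\<rho>^2)^k"
proof -
  define T where "T j = gm n a x j j" for j
  have Tsq: "T j = (\<Sum>i<n. (wv n a x j i)^2)" for j unfolding T_def gm_def by (simp add: power2_eq_square)
  have nn: "T j \<ge> 0" for j unfolding Tsq by (intro sum_nonneg) auto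
  have T0: "T 0 = M" unfolding Tsq using xx by (simp add: wv0)
  have lc: "(T (Suc j))^2 \<le> T j * T (Suc (Suc j))" for j
  proof -
    have "T (Suc j) = gm n a x j (Suc (Suc j))"
      unfolding T_def using gm_eq[OF sym, where n=n and x=x and p="Suc j" and q="Suc j"]
        gm_eq[OF sym, where n=n and x=x and p=j and q="Suc (Suc j)"] by simp
    also have "\<dots> = (\<Sum>i<n. wv n a x j i * wv n a x (Suc (Suc j)) i)" unfolding gm_def ..
    finally have "(T (Suc j))^2 = (\<Sum>i<n. wv n a x j i * wv n a x (Suc (Suc j)) i)^2" by simp
    also have "\<dots> \<le> T j * T (Suc (Suc j))" unfolding Tsq by (rule cauchy_schwarz_sum)
    finally show ?thesis .
  qed
  have mu1: "gm n a x 0 1 = \<rho> * M" unfolding \<rho>_def gm_def using M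
    by (simp add: wv0 wv_Suc[where k=0, simplified])
  have "(gm n a x 0 1)^2 \<le> T 0 * T 1"
    unfolding gm_def Tsq by (rule cauchy_schwarz_sum)
  hence "(\<rho> * M)^2 \<le> M * T 1" using mu1 T0 by simp
  hence "M * (\<rho>^2 * M) \<le> M * T 1" by (simp add: power2_eq_square algebra_simps)
  hence r: "\<rho>^2 \<le> T 1 / M" using M by (simp add: field_simps)
  have "T k \<ge> T 0 * (T 1 / T 0)^k" by (rule logconv[where T=T]) (use nn T0 M lc in auto)
  moreover have "(\<rho>^2)^k \<le> (T 1 / M)^k" by (rule power_mono[OF r]) simp
  ultimately have "T k \<ge> M * (\<rho>^2)^k" using T0 M by (metis mult_left_mono order_trans less_imp_le)
  thus ?thesis unfolding Tsq .
qed

lemma main_bound: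
  fixes sg x :: "nat \<Rightarrow> real"
  assumes sym: "\<And>i j. a i j = a j i"
    and sg2: "\<And>i. sg i * sg i = 1" and asg: "\<And>i j. sg i * a i j * sg j = - a i j"
    and xx: "(\<Sum>l<n. (x l)^2) = M" and xy: "(\<Sum>l<n. x l * (sg l * x l)) = 0" and M: "M > 0"
  defines "\<rho> \<equiv> (\<Sum>i<n. x i * (\<Sum>l<n. a i l * x l)) / M"
  shows "(\<Sum>i<n. pw n a (k+k) i i) \<ge> 2 * (\<rho>^2)^k"
proof -
  have g: "M * (\<Sum>i<n. pw n a (k+k) i i) - 2 * (\<Sum>i<n. (wv n a x k i)^2) \<ge> 0"
    unfolding trace_gap[OF sym sg2 asg xx xy M] using M
    by (intro sum_nonneg divide_nonneg_pos) auto
  have "(\<Sum>i<n. (wv n a x k i)^2) \<ge> M * (\<rho>^2)^k" unfolding \<rho>_def by (rule moments[OF sym xx M])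
  with g have "M * (\<Sum>i<n. pw n a (k+k) i i) \<ge> M * (2 * (\<rho>^2)^k)" by simp
  thus ?thesis using M by simp
qed

lemma eq_case:
  fixes sg x :: "nat \<Rightarrow> real"
  assumes sym: "\<And>i j. a i j = a j i"
    and sg2: "\<And>i. sg i * sg i = 1" and asg: "\<And>i j. sg i * a i j * sg j = - a i j"
    and xx: "(\<Sum>l<n. (x l)^2) = M" and xy: "(\<Sum>l<n. x l * (sg l * x l)) = 0" and M: "M > 0"
  defines "\<rho> \<equiv> (\<Sum>i<n. x i * (\<Sum>l<n. a i l * x l)) / M"
  assumes eq: "(\<Sum>i<n. pw n a 2 i i) = 2 * \<rho>^2"
  shows "\<And>i l. i < n \<Longrightarrow> l < n \<Longrightarrow> M * a i l - (\<Sum>l<n. a i l * x l) * x l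
        - (\<Sum>l<n. a i l * (sg l * x l)) * (sg l * x l) = 0"
proof -
  fix i l assume i: "i < n" and l: "l < n"
  define G where "G i = (\<Sum>l<n. (M * pw n a 1 i l - (\<Sum>l<n. pw n a 1 i l * x l) * x l
        - (\<Sum>l<n. pw n a 1 i l * (sg l * x l)) * (sg l * x l))^2) / M" for i
  have Gnn: "G i \<ge> 0" for i unfolding G_def using M by (intro sum_nonneg divide_nonneg_pos) auto
  have W: "(\<Sum>i<n. (wv n a x 1 i)^2) \<ge> M * (\<rho>^2)^1" unfolding \<rho>_def by (rule moments[OF sym xx M])
  have gp:  "M * (\<Sum>i<n. pw n a (1+1) i i) - 2 * (\<Sum>i<n. (wv n a x 1 i)^2) = (\<Sum>i<n. G i)"
    unfolding G_def by (rule trace_gap[OF sym sg2 asg xx xy M])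
  have c2: "(\<Sum>i<n. pw n a (1+1) i i) = 2 * \<rho>^2" using eq by (simp only: one_add_one)
  have "M * (\<Sum>i<n. pw n a (1+1) i i) = 2 * (M * \<rho>^2)" unfolding c2 by simp
  moreover have W': "(\<Sum>i<n. (wv n a x 1 i)^2) \<ge> M * \<rho>^2" using W by simp
  ultimately have "(\<Sum>i<n. G i) \<le> 0" using gp by linarith
  hence "(\<Sum>i<n. G i) = 0" using Gnn by (meson antisym sum_nonneg)
  hence "G i = 0" using Gnn i by (subst (asm) sum_nonneg_eq_0_iff) auto
  hence "(\<Sum>l<n. (M * pw n a 1 i l - (\<Sum>l<n. pw n a 1 i l * x l) * x l
        - (\<Sum>l<n. pw n a 1 i l * (sg l * x l)) * (sg l * x l))^2) = 0"
    unfolding G_def using M by simp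
  hence "(M * pw n a 1 i l - (\<Sum>l<n. pw n a 1 i l * x l) * x l
        - (\<Sum>l<n. pw n a 1 i l * (sg l * x l)) * (sg l * x l))^2 = 0"
    using l by (subst (asm) sum_nonneg_eq_0_iff) auto
  moreover have p1: "pw n a 1 i = a i" by (rule ext, rule pw_one[OF i])
  ultimately show "M * a i l - (\<Sum>l<n. a i l * x l) * x l
        - (\<Sum>l<n. a i l * (sg l * x l)) * (sg l * x l) = 0"
    by (simp only: p1 power_eq_0_iff)
qed

definition ad :: "(nat \<Rightarrow> nat \<Rightarrow> bool) \<Rightarrow> nat \<Rightarrow> nat \<Rightarrow> real" where
  "ad E i j = (if E i j then 1 else 0)"

lemma adj_mat_carrier: "adj_mat n E \<in> carrier_mat n n"
  unfolding adj_mat_def by simp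

lemma adj_mat_entry: "i < n \<Longrightarrow> j < n \<Longrightarrow> adj_mat n E $$ (i,j) = ad E i j"
  unfolding adj_mat_def ad_def by simp

lemma adj_pow: "i < n \<Longrightarrow> j < n \<Longrightarrow> (adj_mat n E ^\<^sub>m k) $$ (i,j) = pw n (ad E) k i j"
proof (induct k arbitrary: j)
  case 0 then show ?case using adj_mat_carrier[of n E] by auto
next
  case (Suc k)
  have Ak: "adj_mat n E ^\<^sub>m k \<in> carrier_mat n n" using adj_mat_carrier by simp
  have "(adj_mat n E ^\<^sub>m Suc k) $$ (i,j) = (\<Sum>l<n. (adj_mat n E ^\<^sub>m k) $$ (i,l) * adj_mat n E $$ (l,j))"
    using Suc.prems by (simp del: index_mult_mat add: mult_entry[OF Ak adj_mat_carrier])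
  also have "\<dots> = pw n (ad E) (Suc k) i j"
    using Suc by (simp del: index_mult_mat add: adj_mat_entry)
  finally show ?case .
qed

lemma degree_sum: "real (degree n E i) = (\<Sum>j<n. ad E i j)"
proof -
  have "(\<Sum>j<n. ad E i j) = (\<Sum>j\<in>{j\<in>{..<n}. E i j}. 1)"
    unfolding ad_def by (subst sum.inter_filter) auto
  also have "{j\<in>{..<n}. E i j} = {j. j < n \<and> E i j}" by auto
  finally show ?thesis unfolding degree_def by simp
qed

lemma finite_edge_set: "finite (edge_set n E)"
proof -
  have "edge_set n E \<subseteq> {..<n} \<times> {..<n}" unfolding edge_set_def by auto
  thus ?thesis by (rule finite_subset) auto
qed

lemma double_count:
  fixes f :: "nat \<Rightarrow> nat \<Rightarrow> real"
  assumes G: "simple_graph n E" and fs: "\<And>i j. f i j = f j i"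
  shows "(\<Sum>i<n. \<Sum>j<n. ad E i j * f i j) = 2 * (\<Sum>(i,j)\<in>edge_set n E. f i j)"
proof -
  have Er: "E i j \<Longrightarrow> i < n \<and> j < n" "E i j \<Longrightarrow> E j i" "\<not> E i i" for i j
    using G unfolding simple_graph_def by blast+
  define sw where "sw = (\<lambda>(i::nat,j::nat). (j,i))"
  have "(\<Sum>i<n. \<Sum>j<n. ad E i j * f i j) = (\<Sum>p\<in>{..<n}\<times>{..<n}. ad E (fst p) (snd p) * f (fst p) (snd p))"
    by (simp add: sum.cartesian_product case_prod_beta)
  also have "\<dots> = (\<Sum>p\<in>{p\<in>{..<n}\<times>{..<n}. E (fst p) (snd p)}. f (fst p) (snd p))"
    unfolding ad_def by (subst sum.inter_filter) (auto intro!: sum.cong)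
  also have "{p\<in>{..<n}\<times>{..<n}. E (fst p) (snd p)} = edge_set n E \<union> sw ` edge_set n E"
    unfolding edge_set_def sw_def using Er
    by (auto simp: image_iff) (metis linorder_neqE_nat)
  also have "(\<Sum>p\<in>edge_set n E \<union> sw ` edge_set n E. f (fst p) (snd p))
      = (\<Sum>p\<in>edge_set n E. f (fst p) (snd p)) + (\<Sum>p\<in>sw ` edge_set n E. f (fst p) (snd p))"
    using finite_edge_set[of n E] by (intro sum.union_disjoint) (auto simp: edge_set_def sw_def)
  also have "(\<Sum>p\<in>sw ` edge_set n E. f (fst p) (snd p)) = (\<Sum>p\<in>edge_set n E. f (fst (sw p)) (snd (sw p)))"
    by (rule sum.reindex_cong[of sw]) (auto simp: inj_on_def sw_def)
  also have "(\<Sum>p\<in>edge_set n E. f (fst (sw p)) (snd (sw p))) = (\<Sum>p\<in>edge_set n E. f (fst p) (snd p))"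
    by (intro sum.cong refl) (auto simp: sw_def fs)
  finally show ?thesis by (simp add: case_prod_beta')
qed

lemma sum_degrees:
  assumes G: "simple_graph n E"
  shows "(\<Sum>i<n. real (degree n E i)) = 2 * real (num_edges n E)"
  using double_count[OF G, of "\<lambda>_ _. 1"] unfolding degree_sum num_edges_def
  by (simp add: finite_edge_set)

definition sgn_of :: "nat set \<Rightarrow> nat \<Rightarrow> real" where
  "sgn_of S i = (if i \<in> S then -1 else 1)"

definition xd :: "nat \<Rightarrow> (nat \<Rightarrow> nat \<Rightarrow> bool) \<Rightarrow> nat \<Rightarrow> real" where
  "xd n E i = sqrt (real (degree n E i))"

lemma ad_sym: "simple_graph n E \<Longrightarrow> ad E i j = ad E j i"
  unfolding simple_graph_def ad_def by metis

lemma sg2: "sgn_of S i * sgn_of S i = 1"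
  unfolding sgn_of_def by simp

lemma asg: "\<forall>i j. E i j \<longrightarrow> (i \<in> S \<longleftrightarrow> j \<notin> S) \<Longrightarrow> sgn_of S i * ad E i j * sgn_of S j = - ad E i j"
  unfolding sgn_of_def ad_def by auto

lemma xx: "simple_graph n E \<Longrightarrow> (\<Sum>l<n. (xd n E l)^2) = 2 * real (num_edges n E)"
  unfolding xd_def by (simp add: sum_degrees)

lemma xy:
  assumes G: "simple_graph n E" and S: "\<forall>i j. E i j \<longrightarrow> (i \<in> S \<longleftrightarrow> j \<notin> S)"
  shows "(\<Sum>l<n. xd n E l * (sgn_of S l * xd n E l)) = 0"
proof -
  define S0 where "S0 = (\<Sum>l<n. \<Sum>j<n. ad E l j * sgn_of S l)"
  have "(\<Sum>l<n. xd n E l * (sgn_of S l * xd n E l)) = (\<Sum>l<n. sgn_of S l * real (degree n E l))"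
    unfolding xd_def by (intro sum.cong refl) (simp add: mult.left_commute[of "sqrt _"] flip: power2_eq_square)
  also have "\<dots> = S0" unfolding S0_def degree_sum by (simp add: sum_distrib_left mult.commute)
  finally have e: "(\<Sum>l<n. xd n E l * (sgn_of S l * xd n E l)) = S0" .
  have "S0 = (\<Sum>j<n. \<Sum>l<n. ad E l j * sgn_of S l)" unfolding S0_def by (rule sum.swap)
  also have "\<dots> = (\<Sum>j<n. \<Sum>l<n. - (ad E j l * sgn_of S j))"
  proof (intro sum.cong refl)
    fix j l
    have "sgn_of S l * ad E l j * sgn_of S j = - ad E l j" by (rule asg[OF S])
    hence "ad E l j * sgn_of S l = - (ad E l j * sgn_of S j)" unfolding sgn_of_def
      by (auto split: if_splits)
    thus "ad E l j * sgn_of S l = - (ad E j l * sgn_of S j)" using ad_sym[OF G, of l j] by simp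
  qed
  also have "\<dots> = - S0" unfolding S0_def by (simp add: sum_negf)
  finally have "S0 = 0" by simp
  with e show ?thesis by simp
qed

lemma mu1:
  assumes G: "simple_graph n E"
  shows "(\<Sum>i<n. xd n E i * (\<Sum>l<n. ad E i l * xd n E l)) = 2 * R_half n E"
proof -
  have "(\<Sum>i<n. xd n E i * (\<Sum>l<n. ad E i l * xd n E l)) = (\<Sum>i<n. \<Sum>l<n. ad E i l * (xd n E i * xd n E l))"
    by (simp add: sum_distrib_left mult_ac)
  also have "\<dots> = 2 * (\<Sum>(i,j)\<in>edge_set n E. xd n E i * xd n E j)"
    by (rule double_count[OF G]) simp
  also have "(\<Sum>(i,j)\<in>edge_set n E. xd n E i * xd n E j) = R_half n E"
    unfolding R_half_def xd_def by (simp add: real_sqrt_mult)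
  finally show ?thesis .
qed

lemma exp_list_sums: "(\<lambda>k. (\<Sum>e\<leftarrow>es. e^k) / fact k) sums (\<Sum>e\<leftarrow>es. exp (e::real))"
proof (induct es)
  case Nil then show ?case by simp
next
  case (Cons e es)
  have "(\<lambda>k. e^k / fact k) sums exp e" using exp_converges[of e] by (simp add: divide_inverse mult.commute)
  from sums_add[OF this Cons] show ?case by (simp add: add_divide_distrib)
qed

lemma bound_sums:
  "(\<lambda>k. (\<rho>^k + (-\<rho>)^k + (if k = 0 then r else 0)) / fact k) sums (2 * cosh (\<rho>::real) + r)"
proof -
  have e1: "(\<lambda>k. \<rho>^k / fact k) sums exp \<rho>" using exp_converges[of \<rho>] by (simp add: divide_inverse mult.commute)
  have e2: "(\<lambda>k. (-\<rho>)^k / fact k) sums exp (-\<rho>)" using exp_converges[of "-\<rho>"] by (simp add: divide_inverse mult.commute)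
  have e3: "(\<lambda>k. (if k = 0 then r else 0) / fact k) sums r"
  proof -
    have "(\<lambda>k. if k = 0 then r else 0) sums r" using sums_single[of 0 "\<lambda>_. r"] by simp
    moreover have "(\<lambda>k. (if k = 0 then r else 0) / fact k) = (\<lambda>k. if k = 0 then r else 0)" by auto
    ultimately show ?thesis by simp
  qed
  have "exp \<rho> + exp (-\<rho>) = 2 * cosh \<rho>" by (simp add: cosh_def)
  with sums_add[OF sums_add[OF e1 e2] e3] show ?thesis by (simp add: add_divide_distrib)
qed

lemma ee_sums:
  assumes G: "simple_graph n E"
  shows "(\<lambda>k. (\<Sum>i<n. pw n (ad E) k i i) / fact k) sums estrada_index n E"
proof -
  have A: "adj_mat n E \<in> carrier_mat n n" by (rule adj_mat_carrier)
  have sym: "\<And>i j. i < n \<Longrightarrow> j < n \<Longrightarrow> adj_mat n E $$ (i,j) = adj_mat n E $$ (j,i)"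
    by (simp add: adj_mat_entry ad_sym[OF G])
  obtain es where cp: "char_poly (adj_mat n E) = (\<Prod>a\<leftarrow>es. [:- a, 1:])"
    using real_sym_char_poly_split[OF A sym] by blast
  have "\<exists>es :: real list. char_poly (adj_mat n E) = (\<Prod>a\<leftarrow>es. [:- a, 1:]) \<and> estrada_index n E = (\<Sum>a\<leftarrow>es. exp a)"
    unfolding estrada_index_def by (rule someI_ex) (use cp in blast)
  then obtain es' where cp': "char_poly (adj_mat n E) = (\<Prod>a\<leftarrow>es'. [:- a, 1:])"
    and ee: "estrada_index n E = (\<Sum>a\<leftarrow>es'. exp a)" by blast
  have tr: "(\<Sum>e\<leftarrow>es'. e^k) = (\<Sum>i<n. pw n (ad E) k i i)" for k
    using trace_pow_eigen[OF A cp', of k] by (simp add: adj_pow)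
  show ?thesis using exp_list_sums[of es'] unfolding ee tr .
qed

lemma graph_sq_bound:
  assumes G: "simple_graph n E" and S: "\<forall>i j. E i j \<longrightarrow> (i \<in> S \<longleftrightarrow> j \<notin> S)"
    and m: "num_edges n E \<ge> 1"
  shows "(\<Sum>i<n. xd n E i * (\<Sum>l<n. ad E i l * xd n E l)) / (2 * real (num_edges n E))
     = R_half n E / real (num_edges n E)"
  using m by (simp add: mu1[OF G])

lemma c_bound:
  assumes G: "simple_graph n E" and S: "\<forall>i j. E i j \<longrightarrow> (i \<in> S \<longleftrightarrow> j \<notin> S)"
    and m: "num_edges n E \<ge> 1"
  defines "\<rho> \<equiv> R_half n E / real (num_edges n E)"
  shows "(\<Sum>i<n. pw n (ad E) k i i) \<ge> \<rho>^k + (-\<rho>)^k + (if k = 0 then real n - 2 else 0)"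
proof -
  note sym = ad_sym[OF G] and sg2 = sg2[of S] and asg = asg[OF S]
  have M: "2 * real (num_edges n E) > 0" using m by simp
  show ?thesis
  proof (cases "k = 0")
    case True then show ?thesis by simp
  next
    case k0: False
    show ?thesis
    proof (cases "even k")
      case False
      have "(\<Sum>i<n. pw n (ad E) k i i) = 0" by (intro sum.neutral ballI pw_odd_diag[OF sg2 asg False])
      moreover have "(-\<rho>)^k = - (\<rho>^k)" using False by simp
      ultimately show ?thesis using k0 by simp
    next
      case True
      then obtain j where kj: "k = j + j" by (metis evenE mult_2)
      have "(\<Sum>i<n. pw n (ad E) (j+j) i i) \<ge> 2 * (\<rho>^2)^j"
        using main_bound[OF sym sg2 asg xx[OF G] xy[OF G S] M, of j]
        unfolding graph_sq_bound[OF G S m] \<rho>_def .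
      moreover have "(-\<rho>)^k = \<rho>^k" using True by simp
      moreover have "(\<rho>^2)^j = \<rho>^k" unfolding kj by (simp add: power_mult[symmetric] mult_2[symmetric])
      ultimately show ?thesis using k0 kj by simp
    qed
  qed
qed

lemma deg_pos_nb: "degree n E i > 0 \<Longrightarrow> \<exists>j<n. E i j"
  unfolding degree_def by (auto simp: card_gt_0_iff)

lemma nb_deg_pos:
  assumes "E i j" "j < n" shows "degree n E i > 0"
proof -
  have "j \<in> {j. j < n \<and> E i j}" using assms by auto
  moreover have "finite {j. j < n \<and> E i j}" by auto
  ultimately show ?thesis unfolding degree_def by (metis card_gt_0_iff empty_iff)
qed

lemma eq_structure:
  assumes G: "simple_graph n E" and S: "\<forall>i j. E i j \<longrightarrow> (i \<in> S \<longleftrightarrow> j \<notin> S)"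
    and m: "num_edges n E \<ge> 1"
    and hyp: "\<And>i l. i < n \<Longrightarrow> l < n \<Longrightarrow> (2 * real (num_edges n E)) * ad E i l
       - (\<Sum>l<n. ad E i l * xd n E l) * xd n E l
       - (\<Sum>l<n. ad E i l * (sgn_of S l * xd n E l)) * (sgn_of S l * xd n E l) = 0"
  shows "complete_bipartite_plus_isolated n E"
proof -
  have Er: "E i j \<Longrightarrow> i < n \<and> j < n" "E i j \<Longrightarrow> E j i" for i j
    using G unfolding simple_graph_def by blast+
  define M where "M = 2 * real (num_edges n E)"
  have M: "M > 0" unfolding M_def using m by simp
  define w where "w i = (\<Sum>l<n. ad E i l * xd n E l)" for i
  have ys: "(\<Sum>l<n. ad E i l * (sgn_of S l * xd n E l)) = - sgn_of S i * w i" for i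
    unfolding w_def sum_distrib_left
    by (intro sum.cong refl) (use S in \<open>auto simp: ad_def sgn_of_def\<close>)
  have key: "M * ad E i l = w i * xd n E l * (1 - sgn_of S i * sgn_of S l)" if "i < n" "l < n" for i l
    using hyp[OF that] unfolding ys M_def[symmetric] w_def[symmetric] by (simp add: algebra_simps)
  have xpos: "xd n E l > 0" if "degree n E l > 0" for l using that unfolding xd_def by simp
  have wpos: "w i > 0" if i: "i < n" and di: "degree n E i > 0" for i
  proof -
    obtain j where j: "j < n" "E i j" using deg_pos_nb[OF di] by blast
    have "degree n E j > 0" using nb_deg_pos[of E j i n] Er(2)[OF j(2)] i by blast
    hence "xd n E j > 0" by (rule xpos)
    also have "xd n E j = ad E i j * xd n E j" using j by (simp add: ad_def)
    also have "\<dots> \<le> w i" unfolding w_def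
      by (rule member_le_sum) (use j in \<open>auto simp: ad_def xd_def\<close>)
    finally show ?thesis .
  qed
  define P where "P = {i. i < n \<and> i \<in> S \<and> degree n E i > 0}"
  define Q where "Q = {i. i < n \<and> i \<notin> S \<and> degree n E i > 0}"
  have PQ: "E i j" if "i \<in> P" "j \<in> Q" for i j
  proof -
    have i: "i < n" "i \<in> S" "degree n E i > 0" and j: "j < n" "j \<notin> S" "degree n E j > 0"
      using that unfolding P_def Q_def by auto
    have "M * ad E i j = w i * xd n E j * 2" using key[OF i(1) j(1)] i(2) j(2) by (simp add: sgn_of_def)
    moreover have "w i * xd n E j * 2 > 0" using wpos[OF i(1) i(3)] xpos[OF j(3)] by simp
    ultimately have "ad E i j \<noteq> 0" by auto
    thus ?thesis unfolding ad_def by (auto split: if_splits)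
  qed
  have char: "E i j \<longleftrightarrow> (i \<in> P \<and> j \<in> Q) \<or> (i \<in> Q \<and> j \<in> P)" for i j
  proof
    assume e: "E i j"
    have "i < n" "j < n" using Er(1)[OF e] by auto
    moreover have "degree n E i > 0" using nb_deg_pos[of E i j n] e \<open>j < n\<close> by blast
    moreover have "degree n E j > 0" using nb_deg_pos[of E j i n] Er(2)[OF e] \<open>i < n\<close> by blast
    moreover have "i \<in> S \<longleftrightarrow> j \<notin> S" using S e by blast
    ultimately show "(i \<in> P \<and> j \<in> Q) \<or> (i \<in> Q \<and> j \<in> P)" unfolding P_def Q_def by auto
  next
    assume "(i \<in> P \<and> j \<in> Q) \<or> (i \<in> Q \<and> j \<in> P)"
    thus "E i j" using PQ Er(2) by blast
  qed
  have "edge_set n E \<noteq> {}" using m unfolding num_edges_def by (metis card.empty not_one_le_zero)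
  then obtain a b where "(a,b) \<in> edge_set n E" by auto
  hence ab: "E a b" unfolding edge_set_def by auto
  have Pne: "P \<noteq> {}" and Qne: "Q \<noteq> {}" using char[of a b] ab by auto
  have Psub: "P \<subseteq> {0..<n}" and Qsub: "Q \<subseteq> {0..<n}" unfolding P_def Q_def by auto
  have fin: "finite P" "finite Q" using Psub Qsub finite_subset by blast+
  have "card P \<ge> 1" "card Q \<ge> 1" using Pne Qne fin by (auto simp: Suc_le_eq card_gt_0_iff)
  moreover have "P \<inter> Q = {}" unfolding P_def Q_def by auto
  ultimately show ?thesis unfolding complete_bipartite_plus_isolated_def
    using Psub Qsub char by blast
qed

lemma cb_traces:
  assumes G: "simple_graph n E" and cb: "complete_bipartite_plus_isolated n E"
    and m: "num_edges n E \<ge> 1"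
  defines "\<rho> \<equiv> R_half n E / real (num_edges n E)"
  shows "(\<Sum>i<n. pw n (ad E) k i i) = \<rho>^k + (-\<rho>)^k + (if k = 0 then real n - 2 else 0)"
proof -
  obtain P Q where Psub: "P \<subseteq> {0..<n}" and Qsub: "Q \<subseteq> {0..<n}" and disj: "P \<inter> Q = {}"
    and char: "\<And>i j. E i j \<longleftrightarrow> (i \<in> P \<and> j \<in> Q) \<or> (i \<in> Q \<and> j \<in> P)"
    using cb unfolding complete_bipartite_plus_isolated_def by blast
  define iP where "iP i = (if i \<in> P then 1 else 0 :: real)" for i
  define iQ where "iQ i = (if i \<in> Q then 1 else 0 :: real)" for i
  define p where "p = real (card P)"
  define q where "q = real (card Q)"
  have adE: "ad E i j = iP i * iQ j + iQ i * iP j" for i j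
    unfolding ad_def iP_def iQ_def char using disj by auto
  have sumind: "(\<Sum>l<n. (if l \<in> X then 1 else 0 :: real)) = real (card X)" if "X \<subseteq> {0..<n}" for X
  proof -
    have "(\<Sum>l<n. (if l \<in> X then 1 else 0 :: real)) = (\<Sum>l\<in>{l\<in>{..<n}. l \<in> X}. 1)"
      by (subst sum.inter_filter) auto
    also have "{l\<in>{..<n}. l \<in> X} = X" using that by auto
    finally show ?thesis by simp
  qed
  have sP: "(\<Sum>l<n. iP l) = p" unfolding iP_def p_def by (rule sumind[OF Psub])
  have sQ: "(\<Sum>l<n. iQ l) = q" unfolding iQ_def q_def by (rule sumind[OF Qsub])
  define g where "g i j = iP i * iP j * q + iQ i * iQ j * p" for i j
  have ga: "(\<Sum>l<n. ad E i l * ad E l j) = g i j" for i j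
  proof -
    have "(\<Sum>l<n. ad E i l * ad E l j) = (\<Sum>l<n. iP i * iP j * iQ l + iQ i * iQ j * iP l)"
      by (intro sum.cong refl) (use disj in \<open>auto simp: adE iP_def iQ_def\<close>)
    also have "\<dots> = g i j" unfolding g_def sum.distrib sum_distrib_left[symmetric] sP sQ by simp
    finally show ?thesis .
  qed
  have gb: "(\<Sum>l<n. g i l * ad E l j) = p * q * ad E i j" for i j
  proof -
    have "(\<Sum>l<n. g i l * ad E l j) = (\<Sum>l<n. q * iP i * iQ j * iP l + p * iQ i * iP j * iQ l)"
      by (intro sum.cong refl) (use disj in \<open>auto simp: adE g_def iP_def iQ_def\<close>)
    also have "\<dots> = p * q * ad E i j" unfolding adE sum.distrib sum_distrib_left[symmetric] sP sQ
      by (simp add: algebra_simps)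
    finally show ?thesis .
  qed
  have pwf: "\<forall>i j. i < n \<longrightarrow> j < n \<longrightarrow> pw n (ad E) (Suc (2*t)) i j = (p*q)^t * ad E i j
      \<and> pw n (ad E) (Suc (Suc (2*t))) i j = (p*q)^t * g i j" for t
  proof (induct t)
    case 0
    show ?case
    proof (intro allI impI conjI)
      fix i j assume i: "i < n" and j: "j < n"
      have p1: "pw n (ad E) 1 i = ad E i" by (rule ext, rule pw_one[OF i])
      show "pw n (ad E) (Suc (2*0)) i j = (p*q)^0 * ad E i j" using p1 by simp
      have "pw n (ad E) (Suc (Suc (2*0))) i j = (\<Sum>l<n. pw n (ad E) 1 i l * ad E l j)"
        by (subst pw.simps(2)) simp
      also have "\<dots> = g i j" unfolding p1 by (rule ga)
      finally show "pw n (ad E) (Suc (Suc (2*0))) i j = (p*q)^0 * g i j" by simp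
    qed
  next
    case (Suc t)
    have e: "2 * Suc t = Suc (Suc (2*t))" by simp
    have IH1: "pw n (ad E) (Suc (2*t)) i j = (p*q)^t * ad E i j" if "i < n" "j < n" for i j
      using Suc.hyps that by blast
    have IH2: "pw n (ad E) (Suc (Suc (2*t))) i j = (p*q)^t * g i j" if "i < n" "j < n" for i j
      using Suc.hyps that by blast
    have O: "pw n (ad E) (Suc (2 * Suc t)) i j = (p*q)^Suc t * ad E i j" if i: "i < n" and j: "j < n" for i j
    proof -
      have "pw n (ad E) (Suc (2 * Suc t)) i j = (\<Sum>l<n. pw n (ad E) (Suc (Suc (2*t))) i l * ad E l j)"
        unfolding e by (subst pw.simps(2)) (rule refl)
      also have "\<dots> = (\<Sum>l<n. (p*q)^t * (g i l * ad E l j))"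
        using i by (intro sum.cong refl) (simp add: IH2 del: pw.simps)
      also have "\<dots> = (p*q)^Suc t * ad E i j" by (simp add: sum_distrib_left[symmetric] gb)
      finally show ?thesis .
    qed
    show ?case
    proof (intro allI impI conjI)
      fix i j assume i: "i < n" and j: "j < n"
      show "pw n (ad E) (Suc (2 * Suc t)) i j = (p*q)^Suc t * ad E i j" by (rule O[OF i j])
      have "pw n (ad E) (Suc (Suc (2 * Suc t))) i j = (\<Sum>l<n. pw n (ad E) (Suc (2 * Suc t)) i l * ad E l j)"
        by (subst pw.simps(2)) (rule refl)
      also have "\<dots> = (\<Sum>l<n. (p*q)^Suc t * (ad E i l * ad E l j))"
      proof (intro sum.cong refl)
        fix l assume "l \<in> {..<n}"
        hence l: "l < n" by simp
        show "pw n (ad E) (Suc (2 * Suc t)) i l * ad E l j = (p*q)^Suc t * (ad E i l * ad E l j)"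
          by (simp only: O[OF i l] mult.assoc)
      qed
      also have "\<dots> = (p*q)^Suc t * g i j" by (simp add: sum_distrib_left[symmetric] ga)
      finally show "pw n (ad E) (Suc (Suc (2 * Suc t))) i j = (p*q)^Suc t * g i j" .
    qed
  qed
  have deg: "real (degree n E i) = iP i * q + iQ i * p" for i
    unfolding degree_sum adE sum.distrib sum_distrib_left[symmetric] sP sQ by simp
  have xprod: "ad E i l * (xd n E i * xd n E l) = ad E i l * (sqrt p * sqrt q)" for i l
    unfolding xd_def deg using disj by (auto simp: adE iP_def iQ_def real_sqrt_mult)
  have "2 * R_half n E = (\<Sum>i<n. xd n E i * (\<Sum>l<n. ad E i l * xd n E l))" by (rule mu1[OF G, symmetric])
  also have "\<dots> = (\<Sum>i<n. \<Sum>l<n. ad E i l * (xd n E i * xd n E l))"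
    by (simp add: sum_distrib_left mult_ac)
  also have "\<dots> = (\<Sum>i<n. \<Sum>l<n. ad E i l) * (sqrt p * sqrt q)"
    by (simp add: xprod sum_distrib_right)
  also have "(\<Sum>i<n. \<Sum>l<n. ad E i l) = 2 * real (num_edges n E)"
    using sum_degrees[OF G] by (simp add: degree_sum)
  finally have "R_half n E = real (num_edges n E) * (sqrt p * sqrt q)" by simp
  hence rho: "\<rho> = sqrt p * sqrt q" unfolding \<rho>_def using m by simp
  have rho2: "\<rho>^2 = p * q" unfolding rho p_def q_def by (simp add: power_mult_distrib)
  show ?thesis
  proof (cases "k = 0")
    case True then show ?thesis by simp
  next
    case k0: False
    show ?thesis
    proof (cases "even k")
      case False
      have "(\<Sum>i<n. pw n (ad E) k i i) = 0"
      proof (intro sum.neutral ballI)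
        fix i
        have SP: "\<forall>i j. E i j \<longrightarrow> (i \<in> P \<longleftrightarrow> j \<notin> P)" using char disj by blast
        show "pw n (ad E) k i i = 0" by (rule pw_odd_diag[OF sg2 asg[OF SP] False])
      qed
      moreover have "(-\<rho>)^k = - (\<rho>^k)" using False by simp
      ultimately show ?thesis using k0 by simp
    next
      case True
      then obtain j where kj: "k = 2 * j" by (rule evenE)
      with k0 obtain t where "j = Suc t" by (cases j) auto
      hence kt: "k = Suc (Suc (2*t))" using kj by simp
      have "(\<Sum>i<n. pw n (ad E) k i i) = (\<Sum>i<n. (p*q)^t * g i i)"
      proof (intro sum.cong refl)
        fix i assume "i \<in> {..<n}"
        thus "pw n (ad E) k i i = (p*q)^t * g i i" unfolding kt using pwf[of t] by blast
      qed
      also have gs: "(\<Sum>i<n. g i i) = q * p + p * q"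
      proof -
        have "(\<Sum>i<n. g i i) = (\<Sum>i<n. q * iP i + p * iQ i)"
          by (intro sum.cong refl) (simp add: g_def iP_def iQ_def)
        also have "\<dots> = q * p + p * q" by (simp add: sum.distrib sum_distrib_left[symmetric] sP sQ)
        finally show ?thesis .
      qed
      have "(\<Sum>i<n. (p*q)^t * g i i) = (p*q)^t * (q * p + p * q)"
        by (simp add: sum_distrib_left[symmetric] gs)
      also have "\<dots> = 2 * (p*q)^Suc t" by (simp add: algebra_simps)
      also have "(p*q)^Suc t = \<rho>^k"
      proof -
        have "(p*q)^Suc t = (\<rho>^2)^Suc t" by (simp only: rho2)
        also have "\<dots> = \<rho>^(2*Suc t)" by (rule power_mult[symmetric])
        also have "2 * Suc t = k" using kt by simp
        finally show ?thesis .
      qed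
      finally show ?thesis using True k0 by simp
    qed
  qed
qed

theorem mainTheorem10:
  fixes n :: nat and E :: "nat \<Rightarrow> nat \<Rightarrow> bool"
  assumes "simple_graph n E" and "bipartite n E" and "num_edges n E \<ge> 1"
  shows "estrada_index n E \<ge> 2 * cosh (R_half n E / real (num_edges n E)) + (real n - 2)
       \<and> (estrada_index n E = 2 * cosh (R_half n E / real (num_edges n E)) + (real n - 2)
           \<longleftrightarrow> complete_bipartite_plus_isolated n E)"
proof -
  note G = assms(1) and m = assms(3)
  obtain S where S: "\<forall>i j. E i j \<longrightarrow> (i \<in> S \<longleftrightarrow> j \<notin> S)" using assms(2) unfolding bipartite_def by blast
  define \<rho> where "\<rho> = R_half n E / real (num_edges n E)"
  define c where "c k = (\<Sum>i<n. pw n (ad E) k i i)" for k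
  define B where "B k = (\<rho>^k + (-\<rho>)^k + (if k = 0 then real n - 2 else 0)) / fact k" for k
  have ees: "(\<lambda>k. c k / fact k) sums estrada_index n E" unfolding c_def by (rule ee_sums[OF G])
  have bs: "B sums (2 * cosh \<rho> + (real n - 2))" unfolding B_def by (rule bound_sums)
  have le: "B k \<le> c k / fact k" for k
    unfolding B_def c_def \<rho>_def by (intro divide_right_mono c_bound[OF G S m]) simp
  have ineq: "2 * cosh \<rho> + (real n - 2) \<le> estrada_index n E" by (rule sums_le[OF le bs ees])
  have iff: "estrada_index n E = 2 * cosh \<rho> + (real n - 2) \<longleftrightarrow> complete_bipartite_plus_isolated n E"
  proof
    assume eq: "estrada_index n E = 2 * cosh \<rho> + (real n - 2)"
    define h where "h k = c k / fact k - B k" for k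
    have hs: "h sums 0" unfolding h_def using sums_diff[OF ees bs] eq by simp
    have hnn: "\<And>k. 0 \<le> h k" unfolding h_def using le by simp
    have "suminf h = 0" using hs by (simp add: sums_unique[symmetric])
    hence "\<forall>k. h k = 0" using suminf_eq_zero_iff[OF sums_summable[OF hs] hnn] by simp
    hence "h 2 = 0" by simp
    hence "c 2 / 2 = (\<rho>^2 + \<rho>^2) / 2" unfolding h_def B_def by simp
    hence c2: "c 2 = 2 * \<rho>^2" by simp
    have M: "2 * real (num_edges n E) > 0" using m by simp
    have "\<And>i l. i < n \<Longrightarrow> l < n \<Longrightarrow> (2 * real (num_edges n E)) * ad E i l
       - (\<Sum>l<n. ad E i l * xd n E l) * xd n E l
       - (\<Sum>l<n. ad E i l * (sgn_of S l * xd n E l)) * (sgn_of S l * xd n E l) = 0"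
      by (rule eq_case[OF ad_sym[OF G] sg2 asg[OF S] xx[OF G] xy[OF G S] M])
         (use c2 in \<open>simp add: graph_sq_bound[OF G S m] \<rho>_def c_def\<close>)
    thus "complete_bipartite_plus_isolated n E" by (rule eq_structure[OF G S m])
  next
    assume cb: "complete_bipartite_plus_isolated n E"
    have "(\<lambda>k. c k / fact k) = B"
      unfolding B_def c_def \<rho>_def by (rule ext) (simp add: cb_traces[OF G cb m])
    with ees bs show "estrada_index n E = 2 * cosh \<rho> + (real n - 2)" by (metis sums_unique)
  qed
  show ?thesis using ineq iff unfolding \<rho>_def by blast
qed

end
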